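(* Let $p$ be an odd prime and let $\mathcal T(\mathbf a)$, $\mathbf a=(a_1,\dots,a_k)$ with $k\ge 4$ and $\gcd(a_1,\dots,a_k)=1$, be a regular triangular form which is $p$-unstable. Then $\lambda_p(\mathcal T(\mathbf a))$ is also regular.
   Context: For positive integers $c_1,\dots,c_k$, $\mathcal T(c_1,\dots,c_k)=\sum c_i\,x_i(x_i+1)/2$. A nonnegative integer $n$ is represented if the equation $\mathcal T(\mathbf c)=n$ has a solution in $\mathbb Z^k$, and locally represented if it has a solution in $\mathbb Z_q^k$ for every prime $q$; the form is regular if it represents every positive integer it locally represents. For an odd prime $p$, $\overline{DQ_p(\mathbf c)}=\{\gamma\in\mathbb Z_p:\gamma=\sum c_iy_i^2,\ y_i\in\mathbb Z_p\}$, and $\mathcal T(\mathbf c)$ is $p$-unstable if $\overline{DQ_p(\mathbf c)}\ne\mathbb Z_p$. For primitive $\mathbf a=(a_1,\dots,a_k)$ and odd prime $p$, let $s_i=0$ if $p\mid a_i$ and $s_i=2$ otherwise, let $s=\min_i \mathrm{ord}_p(p^{s_i}a_i)\in\{1,2\}$, and define $\lambda_p(\mathcal T(\mathbf a))=\mathcal T(p^{s_1-s}a_1,\dots,p^{s_k-s}a_k)$. *)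

theory Defs
  imports "HOL-Computational_Algebra.Computational_Algebra" "HOL-Number_Theory.Number_Theory"
begin

(* A q-adic integer is represented as the compatible sequence of its residues
   g m \<in> {0..<q^m} modulo q^m (Z_q = inverse limit of Z/q^m Z). *)
definition padic :: "int \<Rightarrow> (nat \<Rightarrow> int) \<Rightarrow> bool" where
  "padic q g \<longleftrightarrow> (\<forall>m. 0 \<le> g m \<and> g m < q ^ m \<and> g (Suc m) mod q ^ m = g m)"

definition tri_val :: "int list \<Rightarrow> (nat \<Rightarrow> int) \<Rightarrow> int" where
  "tri_val c x = (\<Sum>i<length c. c ! i * (x i * (x i + 1) div 2))"

definition represented :: "int list \<Rightarrow> int \<Rightarrow> bool" where
  "represented c n \<longleftrightarrow> (\<exists>x :: nat \<Rightarrow> int. tri_val c x = n)"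

(* solvability of T(c)(x) = n in Z_q^k, written in the equivalent form
   sum c_i x_i (x_i+1) = 2n (Z_q is torsion-free), checked on every level q^m *)
definition locally_rep_at :: "int \<Rightarrow> int list \<Rightarrow> int \<Rightarrow> bool" where
  "locally_rep_at q c n \<longleftrightarrow>
     (\<exists>x :: nat \<Rightarrow> nat \<Rightarrow> int. (\<forall>i<length c. padic q (x i)) \<and>
        (\<forall>m. [(\<Sum>i<length c. c ! i * (x i m * (x i m + 1))) = 2 * n] (mod q ^ m)))"

definition locally_represented :: "int list \<Rightarrow> int \<Rightarrow> bool" where
  "locally_represented c n \<longleftrightarrow> (\<forall>q::int. prime q \<longrightarrow> locally_rep_at q c n)"

definition regular :: "int list \<Rightarrow> bool" where
  "regular c \<longleftrightarrow> (\<forall>n::int. n > 0 \<longrightarrow> locally_represented c n \<longrightarrow> represented c n)"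

definition in_DQ_closure :: "int \<Rightarrow> int list \<Rightarrow> (nat \<Rightarrow> int) \<Rightarrow> bool" where
  "in_DQ_closure p c \<gamma> \<longleftrightarrow>
     (\<exists>y :: nat \<Rightarrow> nat \<Rightarrow> int. (\<forall>i<length c. padic p (y i)) \<and>
        (\<forall>m. [(\<Sum>i<length c. c ! i * (y i m)\<^sup>2) = \<gamma> m] (mod p ^ m)))"

definition p_unstable :: "int \<Rightarrow> int list \<Rightarrow> bool" where
  "p_unstable p c \<longleftrightarrow> (\<exists>\<gamma>. padic p \<gamma> \<and> \<not> in_DQ_closure p c \<gamma>)"

definition s_exp :: "int \<Rightarrow> int \<Rightarrow> nat" where
  "s_exp p ai = (if p dvd ai then 0 else 2)"

definition s_min :: "int \<Rightarrow> int list \<Rightarrow> nat" where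
  "s_min p a = Min ((\<lambda>ai. multiplicity p (p ^ s_exp p ai * ai)) ` set a)"

(* lambda_p: a_i \<mapsto> p^(s_i - s) a_i, computed as (p^s_i a_i) / p^s (exact division) *)
definition lambda_p :: "int \<Rightarrow> int list \<Rightarrow> int list" where
  "lambda_p p a = map (\<lambda>ai. (p ^ s_exp p ai * ai) div p ^ s_min p a) a"

end

theory Submission imports Defs begin

lemma padic_cong: assumes "padic q g" shows "[g (Suc m) = g m] (mod q^m)"
  using assms unfolding padic_def cong_def by (metis mod_pos_pos_trivial)

lemma padic_of:
  fixes q :: int
  assumes "q > 0" "\<And>m. [f (Suc m) = f m] (mod q^m)"
  shows "padic q (\<lambda>m. f m mod q^m)"
  unfolding padic_def
proof (intro allI conjI)
  fix m
  show "0 \<le> f m mod q ^ m" using assms by simp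
  show "f m mod q ^ m < q ^ m" using assms by simp
  have "q^m dvd q^Suc m" by (simp add: le_imp_power_dvd)
  then have "f (Suc m) mod q ^ Suc m mod q ^ m = f (Suc m) mod q^m" by (simp add: mod_mod_cancel)
  also have "\<dots> = f m mod q^m" using assms(2)[of m] by (simp add: cong_def)
  finally show "f (Suc m) mod q ^ Suc m mod q ^ m = f m mod q ^ m" .
qed


lemma not_dvd_2: fixes p :: int assumes "prime p" "odd p" shows "\<not> p dvd 2"
proof
  assume "p dvd 2"
  then have "p \<le> 2" using zdvd_imp_le by auto
  moreover have "p \<ge> 2" using assms prime_ge_2_int by auto
  ultimately have "p = 2" by simp
  with assms show False by simp
qed

lemma hensel_step:
  fixes p a v e :: int
  assumes p: "prime p" "odd p" and a: "\<not> p dvd a" and v: "\<not> p dvd v" and k: "k \<ge> 1"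
    and c: "[a*v^2 = e] (mod p^k)"
  shows "\<exists>t. [a*(v + p^k*t)^2 = e] (mod p^(Suc k))"
proof -
  obtain r where r: "a*v^2 - e = p^k * r" using c by (auto simp: cong_iff_dvd_diff dvd_def)
  have "\<not> p dvd 2*a*v" using p a v not_dvd_2 by (simp add: prime_dvd_mult_iff)
  then have "coprime (2*a*v) p" using p prime_imp_coprime coprime_commute by blast
  then obtain w where w: "[2*a*v*w = 1] (mod p)" using cong_solve_coprime_int by blast
  define t where "t = - r * w"
  have "[r * (2*a*v*w) = r * 1] (mod p)" using cong_scalar_left[OF w, of r] .
  then have "[r + 2*a*v*t = r + - (r * 1)] (mod p)"
    unfolding t_def by (intro cong_add cong_refl) (simp add: cong_minus_minus_iff algebra_simps)
  then have d1: "p dvd r + 2*a*v*t" by (simp add: cong_0_iff)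
  define P where "P = p^k"
  have eq0: "a*(v + P*t)^2 - e = (a*v^2 - e) + P*(2*a*v*t) + (P*P)*(a*t^2)"
    by (simp add: power2_eq_square algebra_simps)
  have eq: "a*(v + P*t)^2 - e = P * (r + 2*a*v*t) + (P*P)*(a*t^2)"
    unfolding eq0 using r unfolding P_def by (simp add: distrib_left)
  have "p^(Suc k) dvd P * (r + 2*a*v*t)" using d1 unfolding P_def by simp
  moreover have "p^(Suc k) dvd (P*P) * (a*t^2)"
  proof -
    have "P*P = p^(k+k)" unfolding P_def by (simp add: power_add)
    moreover have "p^(Suc k) dvd p^(k+k)" using k by (intro le_imp_power_dvd) simp
    ultimately show ?thesis by simp
  qed
  ultimately have "p^(Suc k) dvd a*(v + P*t)^2 - e" unfolding eq by (rule dvd_add)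
  then show ?thesis unfolding P_def by (auto simp: cong_iff_dvd_diff)
qed


lemma hensel:
  fixes p a u C :: int
  assumes p: "prime p" "odd p" and a: "\<not> p dvd a" and u: "\<not> p dvd u" and d: "padic p \<delta>"
    and c: "[a*u^2 = \<delta> 1 - C] (mod p)"
  shows "\<exists>w. padic p w \<and> (\<forall>m. [a*(w m)^2 = \<delta> m - C] (mod p^m))"
proof -
  define T where "T = (\<lambda>k v. SOME t. [a*(v + p^(Suc k)*t)^2 = \<delta> (Suc (Suc k)) - C] (mod p^(Suc (Suc k))))"
  define V where "V = rec_nat u (\<lambda>k v. v + p^(Suc k) * T k v)"
  have V0: "V 0 = u" unfolding V_def by simp
  have VS: "V (Suc k) = V k + p^(Suc k) * T k (V k)" for k unfolding V_def by simp
  have inv: "[a*(V k)^2 = \<delta> (Suc k) - C] (mod p^(Suc k)) \<and> [V k = u] (mod p)" for k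
  proof (induction k)
    case 0 then show ?case using c V0 by simp
  next
    case (Suc k)
    then have i1: "[a*(V k)^2 = \<delta> (Suc k) - C] (mod p^(Suc k))" and i2: "[V k = u] (mod p)" by auto
    have nd: "\<not> p dvd V k"
    proof
      assume "p dvd V k" then have "p dvd u" using i2 by (metis cong_dvd_iff)
      with u show False by simp
    qed
    have "[\<delta> (Suc (Suc k)) = \<delta> (Suc k)] (mod p^(Suc k))" using padic_cong[OF d] .
    then have "[a*(V k)^2 = \<delta> (Suc (Suc k)) - C] (mod p^(Suc k))"
      using i1 by (meson cong_diff cong_refl cong_sym cong_trans)
    from hensel_step[OF p a nd _ this] have "\<exists>t. [a*(V k + p^(Suc k)*t)^2 = \<delta> (Suc (Suc k)) - C] (mod p^(Suc (Suc k)))" by simp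
    then have h1: "[a*(V (Suc k))^2 = \<delta> (Suc (Suc k)) - C] (mod p^(Suc (Suc k)))"
      unfolding VS T_def by (rule someI_ex)
    have "[V (Suc k) = V k] (mod p)" unfolding VS cong_iff_dvd_diff by simp
    then have "[V (Suc k) = u] (mod p)" using i2 by (rule cong_trans)
    with h1 show ?case by simp
  qed
  have comp: "[V (Suc m) = V m] (mod p^m)" for m
    unfolding VS cong_iff_dvd_diff by (simp add: le_imp_power_dvd)
  have ppos: "p > 0" using p prime_gt_0_int by blast
  define w where "w = (\<lambda>m. V m mod p^m)"
  have "padic p w" unfolding w_def by (rule padic_of[OF ppos comp])
  moreover have "[a*(w m)^2 = \<delta> m - C] (mod p^m)" for m
  proof -
    have "[a*(w m)^2 = a*(V m)^2] (mod p^m)" unfolding w_def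
      by (intro cong_scalar_left cong_pow) simp
    moreover have "[a*(V m)^2 = \<delta> (Suc m) - C] (mod p^m)"
      using inv[of m] by (meson cong_dvd_modulus le_imp_power_dvd le_SucI order_refl)
    moreover have "[\<delta> (Suc m) - C = \<delta> m - C] (mod p^m)" using padic_cong[OF d]
      by (intro cong_diff cong_refl)
    ultimately show ?thesis by (meson cong_trans)
  qed
  ultimately show ?thesis by blast
qed


lemma iso_closure:
  fixes p :: int and a :: "int list" and z :: "nat \<Rightarrow> int"
  assumes p: "prime p" "odd p"
    and S: "p dvd (\<Sum>i<length a. if p dvd a!i then 0 else a!i * (z i)^2)"
    and i0: "i0 < length a" "\<not> p dvd a!i0" "\<not> p dvd z i0"
    and g: "padic p \<gamma>"
  shows "in_DQ_closure p a \<gamma>"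
proof -
  define L where "L = length a"
  define A where "A = a!i0"
  define Z where "Z = z i0"
  define f where "f = (\<lambda>i. if p dvd a!i then 0 else a!i * (z i)^2)"
  have ppos: "p > 0" using p prime_gt_0_int by blast
  have "\<not> p dvd 2*A*Z" using p i0 not_dvd_2 unfolding A_def Z_def by (simp add: prime_dvd_mult_iff)
  then have "coprime (2*A*Z) p" using p prime_imp_coprime coprime_commute by blast
  then obtain v where v: "[2*A*Z*v = 1] (mod p)" using cong_solve_coprime_int by blast
  define t where "t = v * (\<gamma> 1 - A)"
  define Y where "Y = (\<lambda>i. (if p dvd a!i then 0 else t * z i) + (if i = i0 then 1 else 0))"
  have trm: "a!i * (Y i)^2 = t^2 * f i + (if i = i0 then 2*t*A*Z + A else 0)" for i
    unfolding Y_def f_def A_def Z_def using i0 by (auto simp: power2_eq_square algebra_simps)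
  have sumY: "(\<Sum>i<L. a!i * (Y i)^2) = t^2 * (\<Sum>i<L. f i) + (2*t*A*Z + A)"
    unfolding trm using i0 by (simp add: sum.distrib sum_distrib_left L_def)
  have "[t^2 * (\<Sum>i<L. f i) = 0] (mod p)" using S unfolding f_def L_def by (simp add: cong_0_iff)
  moreover have "[2*t*A*Z = \<gamma> 1 - A] (mod p)"
  proof -
    have "[(2*A*Z*v) * (\<gamma> 1 - A) = 1 * (\<gamma> 1 - A)] (mod p)" using v by (rule cong_scalar_right)
    then show ?thesis unfolding t_def by (simp add: algebra_simps)
  qed
  ultimately have "[t^2 * (\<Sum>i<L. f i) + (2*t*A*Z + A) = 0 + (\<gamma> 1 - A + A)] (mod p)"
    by (intro cong_add cong_refl)
  then have sumc: "[(\<Sum>i<L. a!i * (Y i)^2) = \<gamma> 1] (mod p)" unfolding sumY by simp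
  have "\<exists>l<L. \<not> p dvd a!l \<and> \<not> p dvd Y l"
  proof (rule ccontr)
    assume H: "\<not> ?thesis"
    show False
    proof (cases "p dvd t")
      case True
      have "p dvd Y i0" using H i0 unfolding L_def by auto
      then have "p dvd t*Z + 1" unfolding Y_def Z_def using i0 by simp
      moreover have "p dvd t*Z" using True by simp
      ultimately have "p dvd 1" using dvd_add_right_iff by blast
      with p show False by (simp add: prime_int_iff)
    next
      case False
      have zi: "p dvd z i" if "i < L" "i \<noteq> i0" "\<not> p dvd a!i" for i
      proof -
        have "p dvd Y i" using H that by auto
        then have "p dvd t * z i" unfolding Y_def using that by simp
        then show ?thesis using False p by (simp add: prime_dvd_mult_iff)
      qed
      have fi: "p dvd f i" if "i \<in> {..<L} - {i0}" for i
        using zi[of i] that unfolding f_def by (auto simp: power2_eq_square)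
      have "(\<Sum>i<L. f i) = f i0 + (\<Sum>i\<in>{..<L} - {i0}. f i)"
        using i0 unfolding L_def by (intro sum.remove) auto
      moreover have "p dvd (\<Sum>i\<in>{..<L} - {i0}. f i)" using fi by (intro dvd_sum) auto
      moreover have "p dvd (\<Sum>i<L. f i)" using S unfolding f_def L_def by simp
      ultimately have "p dvd f i0" using dvd_add_right_iff by (metis add.commute)
      then have "p dvd A * Z^2" unfolding f_def A_def Z_def using i0 by simp
      then show False using p i0 unfolding A_def Z_def by (simp add: prime_dvd_mult_iff prime_dvd_power_iff)
    qed
  qed
  then obtain l where l: "l < L" "\<not> p dvd a!l" "\<not> p dvd Y l" by blast
  define C where "C = (\<Sum>i\<in>{..<L} - {l}. a!i * (Y i)^2)"
  have split: "(\<Sum>i<L. a!i * (Y i)^2) = a!l * (Y l)^2 + C"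
    unfolding C_def using l by (intro sum.remove) auto
  have "[a!l * (Y l)^2 = \<gamma> 1 - C] (mod p)"
  proof -
    have "[a!l * (Y l)^2 + C - C = \<gamma> 1 - C] (mod p)" using sumc unfolding split
      by (intro cong_diff cong_refl)
    then show ?thesis by simp
  qed
  from hensel[OF p l(2) l(3) g this] obtain w where
    w: "padic p w" "\<And>m. [a!l*(w m)^2 = \<gamma> m - C] (mod p^m)" by blast
  define y where "y = (\<lambda>i m. if i = l then w m else Y i mod p^m)"
  have "padic p (y i)" for i
  proof (cases "i = l")
    case True then show ?thesis using w unfolding y_def by simp
  next
    case False
    have "padic p (\<lambda>m. (\<lambda>_. Y i) m mod p^m)" by (rule padic_of[OF ppos]) simp
    then show ?thesis using False unfolding y_def by simp
  qed
  moreover have "[(\<Sum>i<length a. a!i * (y i m)^2) = \<gamma> m] (mod p^m)" for m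
  proof -
    have "[(\<Sum>i<L. a!i * (y i m)^2) = (\<Sum>i<L. if i = l then a!l*(w m)^2 else a!i * (Y i)^2)] (mod p^m)"
      by (intro cong_sum) (auto simp: y_def intro!: cong_scalar_left cong_pow)
    also have "(\<Sum>i<L. if i = l then a!l*(w m)^2 else a!i * (Y i)^2) = a!l*(w m)^2 + C"
    proof -
      have "(\<Sum>i<L. if i = l then a!l*(w m)^2 else a!i * (Y i)^2)
          = (if l = l then a!l*(w m)^2 else a!l * (Y l)^2) + (\<Sum>i\<in>{..<L}-{l}. if i = l then a!l*(w m)^2 else a!i * (Y i)^2)"
        using l by (intro sum.remove) auto
      also have "(\<Sum>i\<in>{..<L}-{l}. if i = l then a!l*(w m)^2 else a!i * (Y i)^2) = C"
        unfolding C_def by (intro sum.cong) auto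
      finally show ?thesis by simp
    qed
    also have "[a!l*(w m)^2 + C = (\<gamma> m - C) + C] (mod p^m)" using w(2) by (intro cong_add cong_refl)
    finally show ?thesis unfolding L_def by simp
  qed
  ultimately show ?thesis unfolding in_DQ_closure_def by blast
qed


lemma tri_double: "2 * tri_val c x = (\<Sum>i<length c. c!i * (x i * (x i + 1)))"
proof -
  have h: "2 * (c!i * (x i * (x i + 1) div 2)) = c!i * (x i * (x i + 1))" for i
  proof -
    have "even (x i * (x i + 1))" by simp
    then show ?thesis by (metis dvd_mult_div_cancel mult.left_commute)
  qed
  show ?thesis unfolding tri_val_def sum_distrib_left by (rule sum.cong) (simp_all add: h)
qed

lemma mod_prod_cong: fixes u M :: int shows "[(u mod M) * (u mod M + 1) = u * (u + 1)] (mod M)"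
  by (intro cong_mult cong_add) simp_all

lemma local_transfer:
  fixes q P n m :: int and a lam :: "int list" and F :: "nat \<Rightarrow> int \<Rightarrow> int" and E :: "nat \<Rightarrow> int"
  assumes q: "q > 0" and len: "length lam = length a"
    and Fc: "\<And>i x y M. [x = y] (mod M) \<Longrightarrow> [F i x = F i y] (mod M)"
    and key: "\<And>i x. i < length a \<Longrightarrow> a!i * (F i x * (F i x + 1)) = P * lam!i * (x*(x+1)) + E i"
    and m: "2*m = P*(2*n) + (\<Sum>i<length a. E i)"
    and loc: "locally_rep_at q lam n"
  shows "locally_rep_at q a m"
proof -
  obtain x where x: "\<forall>i<length lam. padic q (x i)"
    "\<forall>m. [(\<Sum>i<length lam. lam ! i * (x i m * (x i m + 1))) = 2 * n] (mod q ^ m)"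
    using loc unfolding locally_rep_at_def by blast
  define x' where "x' = (\<lambda>i m. F i (x i m) mod q^m)"
  have "padic q (x' i)" if "i < length a" for i
    unfolding x'_def
  proof (rule padic_of[OF q])
    fix m show "[F i (x i (Suc m)) = F i (x i m)] (mod q ^ m)"
      using x(1) that len padic_cong Fc by metis
  qed
  moreover have "[(\<Sum>i<length a. a ! i * (x' i M * (x' i M + 1))) = 2 * m] (mod q ^ M)" for M
  proof -
    have "[(\<Sum>i<length a. a ! i * (x' i M * (x' i M + 1))) = (\<Sum>i<length a. a ! i * (F i (x i M) * (F i (x i M) + 1)))] (mod q ^ M)"
      unfolding x'_def by (intro cong_sum cong_scalar_left mod_prod_cong)
    also have "(\<Sum>i<length a. a ! i * (F i (x i M) * (F i (x i M) + 1))) = P * (\<Sum>i<length a. lam!i * (x i M * (x i M + 1))) + (\<Sum>i<length a. E i)"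
      using key by (simp add: sum.distrib sum_distrib_left mult.assoc)
    also have "[P * (\<Sum>i<length a. lam!i * (x i M * (x i M + 1))) + (\<Sum>i<length a. E i) = P * (2*n) + (\<Sum>i<length a. E i)] (mod q^M)"
      using x(2) len by (intro cong_add cong_scalar_left cong_refl) simp
    finally show ?thesis using m by simp
  qed
  ultimately show ?thesis unfolding locally_rep_at_def by blast
qed


theorem proposition3p6:
  fixes p :: int and a :: "int list"
  assumes "prime p" and "odd p"
    and "length a \<ge> 4"
    and "\<forall>ai\<in>set a. ai > 0"
    and "Gcd (set a) = 1"
    and "regular a"
    and "p_unstable p a"
  shows "regular (lambda_p p a)"
proof -
  note p = assms(1,2)
  define L where "L = length a"
  define lam where "lam = lambda_p p a"
  define s where "s = s_min p a"
  define k0 where "k0 = (p - 1) div 2"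
  define cc where "cc = k0 * (k0 + 1) div 2"
  define K where "K = (\<Sum>i<L. if p dvd a!i then 0 else a!i * cc)"
  define F where "F = (\<lambda>i x. if p dvd a!i then x else p * x + k0)"
  have ppos: "p > 0" using p prime_gt_0_int by blast
  have apos: "a!i > 0" if "i < L" for i using assms(4) that unfolding L_def by auto
  have pk: "p = 2*k0 + 1"
  proof -
    have "even (p - 1)" using p by simp
    then have "p - 1 = 2 * ((p-1) div 2)" by simp
    then show ?thesis unfolding k0_def by linarith
  qed
  have k0nn: "k0 \<ge> 0" using ppos pk by simp
  have cc2: "k0 * (k0 + 1) = 2 * cc" unfolding cc_def by simp
  have ccnn: "cc \<ge> 0" unfolding cc_def using k0nn by simp
  have lenlam: "length lam = L" unfolding lam_def lambda_p_def L_def by simp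
  have lamnth: "lam!i = (p ^ s_exp p (a!i) * a!i) div p^s" if "i < L" for i
    using that unfolding lam_def lambda_p_def s_def L_def by simp
  define M where "M = (\<lambda>ai. multiplicity p (p ^ s_exp p ai * ai))"
  have fin: "finite (M ` set a)" by simp
  have ne: "M ` set a \<noteq> {}" using assms(3) by auto
  have sM: "s = Min (M ` set a)" unfolding s_def s_min_def M_def by simp
  have ediv: "p dvd p ^ s_exp p (a!i) * a!i" for i
    by (cases "p dvd a!i") (auto simp: s_exp_def)
  have enz: "p ^ s_exp p (a!i) * a!i \<noteq> 0" if "i < L" for i using apos[OF that] ppos by simp
  have slem: "s \<le> M (a!i)" if "i < L" for i
    unfolding sM using fin that unfolding L_def by (intro Min_le) auto
  have lam_mult: "p^s * lam!i = p ^ s_exp p (a!i) * a!i" if "i < L" for i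
  proof -
    have "p^s dvd p ^ s_exp p (a!i) * a!i" using slem[OF that] unfolding M_def by (rule multiplicity_dvd')
    then show ?thesis using lamnth[OF that] by simp
  qed
  have s1: "s \<ge> 1"
  proof -
    have "\<forall>x\<in>M ` set a. 1 \<le> x"
    proof
      fix x assume "x \<in> M ` set a"
      then obtain i where i: "i < L" "x = M (a!i)" unfolding L_def by (auto simp: in_set_conv_nth)
      have "M (a!i) > 0" unfolding M_def using p enz[OF i(1)] ediv[of i]
        by (subst prime_multiplicity_gt_zero_iff) auto
      then show "1 \<le> x" using i by simp
    qed
    then show ?thesis unfolding sM using fin ne by (simp add: Min_ge_iff)
  qed
  have key: "a!i * (F i x * (F i x + 1)) = p^s * lam!i * (x*(x+1)) + (if p dvd a!i then 0 else a!i * (2*cc))"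
    if "i < L" for i x
  proof (cases "p dvd a!i")
    case True
    then show ?thesis using lam_mult[OF that] unfolding F_def by (simp add: s_exp_def)
  next
    case False
    have "p^s * lam!i = p^2 * a!i" using lam_mult[OF that] False by (simp add: s_exp_def)
    moreover have "(p * x + k0) * (p * x + k0 + 1) = p^2 * (x*(x+1)) + 2*cc"
      unfolding cc2[symmetric] pk by (simp add: power2_eq_square algebra_simps)
    ultimately show ?thesis using False unfolding F_def by (simp add: algebra_simps)
  qed
  have sumE: "(\<Sum>i<L. if p dvd a!i then 0 else a!i * (2*cc)) = 2*K"
    unfolding K_def sum_distrib_left by (rule sum.cong) auto
  show ?thesis
    unfolding regular_def lam_def[symmetric]
  proof (intro allI impI)
    fix n :: int assume n: "n > 0" and locn: "locally_represented lam n"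
    define m where "m = p^s * n + K"
    have locm: "locally_represented a m"
      unfolding locally_represented_def
    proof (intro allI impI)
      fix q :: int assume q: "prime q"
      show "locally_rep_at q a m"
      proof (rule local_transfer[where lam = lam and F = F and P = "p^s" and n = n
            and E = "\<lambda>i. if p dvd a!i then 0 else a!i * (2*cc)"])
        show "q > 0" using q prime_gt_0_int by blast
        show "length lam = length a" using lenlam L_def by simp
        show "[F i x = F i y] (mod Mo)" if "[x = y] (mod Mo)" for i x y Mo
          unfolding F_def using that by (auto intro: cong_add cong_scalar_left)
        show "a!i * (F i x * (F i x + 1)) = p^s * lam!i * (x*(x+1)) + (if p dvd a!i then 0 else a!i * (2*cc))"
          if "i < length a" for i x using key that L_def by simp
        show "2*m = p^s*(2*n) + (\<Sum>i<length a. if p dvd a!i then 0 else a!i * (2*cc))"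
          using sumE unfolding m_def L_def by simp
        show "locally_rep_at q lam n" using locn q unfolding locally_represented_def by simp
      qed
    qed
    have "K \<ge> 0" unfolding K_def using apos ccnn by (intro sum_nonneg) (simp add: order_less_imp_le)
    moreover have "p^s * n > 0" using n ppos by simp
    ultimately have "m > 0" unfolding m_def by linarith
    then obtain x' where x': "tri_val a x' = m"
      using assms(6) locm unfolding regular_def represented_def by blast
    have X2: "(\<Sum>i<L. a!i * (x' i * (x' i + 1))) = 2*m"
      using tri_double[of a x'] x' unfolding L_def by simp
    have divs: "p dvd x' i - k0" if "i < L" "\<not> p dvd a!i" for i
    proof (rule ccontr)
      assume nd: "\<not> p dvd x' i - k0"
      define z where "z = (\<lambda>i. 2 * x' i + 1)"
      have zi: "\<not> p dvd z i"
      proof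
        assume "p dvd z i"
        moreover have "z i = 2 * (x' i - k0) + p" unfolding z_def pk by simp
        ultimately have "p dvd 2 * (x' i - k0)" by (metis dvd_add_left_iff dvd_refl)
        then show False using nd not_dvd_2[OF p] p(1) prime_dvd_mult_iff by blast
      qed
      define X where "X = (\<lambda>i. x' i * (x' i + 1))"
      define S' where "S' = (\<Sum>i<L. if p dvd a!i then 0 else a!i * (X i - 2*cc))"
      have t1: "(if p dvd a!i then 0 else a!i * (X i - 2*cc))
          = a!i * X i - (if p dvd a!i then 0 else a!i * (2*cc)) - (if p dvd a!i then a!i * X i else 0)" for i
        by (simp add: algebra_simps)
      have "S' = (\<Sum>i<L. a!i * X i) - (\<Sum>i<L. if p dvd a!i then 0 else a!i * (2*cc)) - (\<Sum>i<L. if p dvd a!i then a!i * X i else 0)"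
        unfolding S'_def t1 by (simp add: sum_subtractf)
      also have "\<dots> = p^s * (2*n) - (\<Sum>i<L. if p dvd a!i then a!i * X i else 0)"
        using X2 sumE unfolding X_def m_def by simp
      finally have S'eq: "S' = p^s * (2*n) - (\<Sum>i<L. if p dvd a!i then a!i * X i else 0)" .
      have "p dvd p^s" using s1 by (simp add: dvd_power)
      moreover have "p dvd (\<Sum>i<L. if p dvd a!i then a!i * X i else 0)" by (intro dvd_sum) auto
      ultimately have dS': "p dvd S'" unfolding S'eq by (intro dvd_diff) auto
      have t2: "(if p dvd a!i then 0 else a!i * (z i)^2) = 4 * (if p dvd a!i then 0 else a!i * (X i - 2*cc)) + p * (if p dvd a!i then 0 else p * a!i)" for i
      proof -
        have "(z i)^2 = 4 * (X i - 2*cc) + p*p" unfolding z_def X_def cc2[symmetric] pk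
          by (simp add: power2_eq_square algebra_simps)
        then have "a!i*(z i)^2 = a!i*(4*(X i - 2*cc) + p*p)" by simp
        then show ?thesis by (simp add: algebra_simps)
      qed
      have "(\<Sum>i<L. if p dvd a!i then 0 else a!i * (z i)^2) = 4 * S' + p * (\<Sum>i<L. if p dvd a!i then 0 else p * a!i)"
        unfolding t2 S'_def by (simp add: sum.distrib sum_distrib_left)
      then have "p dvd (\<Sum>i<length a. if p dvd a!i then 0 else a!i * (z i)^2)"
        using dS' unfolding L_def by simp
      from iso_closure[OF p this _ that(2) zi] that(1)
      have "\<forall>\<gamma>. padic p \<gamma> \<longrightarrow> in_DQ_closure p a \<gamma>" unfolding L_def by blast
      then show False using assms(7) unfolding p_unstable_def by blast
    qed
    define x where "x = (\<lambda>i. if p dvd a!i then x' i else (x' i - k0) div p)"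
    have Fx: "F i (x i) = x' i" if "i < L" for i
    proof (cases "p dvd a!i")
      case True then show ?thesis unfolding F_def x_def by simp
    next
      case False
      then have "p * ((x' i - k0) div p) = x' i - k0" using divs[OF that] by simp
      then show ?thesis using False unfolding F_def x_def by simp
    qed
    have "2*m = (\<Sum>i<L. a!i * (F i (x i) * (F i (x i) + 1)))"
      using X2 Fx by simp
    also have "\<dots> = p^s * (\<Sum>i<L. lam!i * (x i * (x i + 1))) + 2*K"
      using key sumE by (simp add: sum.distrib sum_distrib_left mult.assoc)
    finally have c1: "2*m = p^s * (\<Sum>i<L. lam!i * (x i * (x i + 1))) + 2*K" .
    have c2: "2*m = p^s * (2*n) + 2*K" unfolding m_def by (simp add: algebra_simps)
    have "p^s * (\<Sum>i<L. lam!i * (x i * (x i + 1))) = p^s * (2*n)" using c1 c2 by linarith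
    then have "(\<Sum>i<L. lam!i * (x i * (x i + 1))) = 2*n" using ppos by simp
    then have "2 * tri_val lam x = 2 * n" using tri_double[of lam x] lenlam by simp
    then show "represented lam n" unfolding represented_def by auto
  qed
qed

end
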